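(* In the setting described in the context, for every $i$ with $1\le i\le m-1$, the bounding triangle $T_i$ contains no point of $P$ in its interior.
   Context: $P$ is a finite set of points in the plane, $s,t\in P$ distinct, and coordinates are chosen so that $t=(0,0)$ and $s$ lies in $C_2^t$ below the line $\ell_t^-=\{x+y=0\}$. Cones: $C_0^v=\{x\ge v_x,y\le v_y\}$, $C_1^v=\{x\ge v_x,y\ge v_y\}$, $C_2^v=\{x\le v_x,y\ge v_y\}$, $C_3^v=\{x\le v_x,y\le v_y\}$ with bisector directions $(1,-1),(1,1),(-1,1),(-1,-1)$. The $\Theta_4$-graph of $P$ has, for each $v\in P$ and cone $C_i^v$ containing a point of $P\setminus\{v\}$, a directed edge from $v$ to a point $w$ of $(P\setminus\{v\})\cap C_i^v$ minimizing the projection of $w-v$ onto the bisector direction (the neighbour of $v$ in $C_i^v$). For a point $p$, $\ell_p^-$ and $\ell_p^+$ are the lines through $p$ of slope $-1$ and $+1$. Algorithm: for a vertex $v$, let $T(v,\ell_t^-)=C_1^v\cap\{x+y\le0\}$ if $v_x+v_y<0$, $T(v,\ell_t^-)=C_3^v\cap\{x+y\ge0\}$ if $v_x+v_y>0$, and $\{v\}$ if $v_x+v_y=0$; $v$ is clean if $T(v,\ell_t^-)$ contains no point of $P$ other than $v$. Starting at $v=s$, while $v\ne t$: if $v$ is not clean, take a sweeping step (go to the neighbour of $v$ in $C_1^v$, resp. $C_3^v$, which lies in $T(v,\ell_t^-)$); otherwise take a greedy step (go to the neighbour of $v$ in the cone $C_i^v$ containing $t$). Let $(p_1,q_1),\dots,(p_{m-1},q_{m-1})$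 be, in order, the edges traversed by greedy steps, and set $p_m=t$. Quadrants of $t$: Northern $=\{y\ge|x|\}$, Southern $=\{y\le-|x|\}$, Western $=\{x\le-|y|\}$, Eastern $=\{x\ge|y|\}$. Bounding triangle: if $p_i$ is in the Northern or Southern quadrant let $\mathcal{L}$ be the horizontal line through $p_i$, otherwise the vertical line through $p_i$; $T_i$ is the triangle formed by the lines $\ell_t^-$, $\mathcal{L}$ and $\ell_{q_i}^+$. *)

theory Defs
  imports "HOL-Analysis.Analysis"
begin

type_synonym pt = "real \<times> real"

definition cone :: "nat \<Rightarrow> pt \<Rightarrow> pt set" where
  "cone i v = (if i = 0 then {w. fst w \<ge> fst v \<and> snd w \<le> snd v}
     else if i = 1 then {w. fst w \<ge> fst v \<and> snd w \<ge> snd v}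
     else if i = 2 then {w. fst w \<le> fst v \<and> snd w \<ge> snd v}
     else {w. fst w \<le> fst v \<and> snd w \<le> snd v})"

definition bisector :: "nat \<Rightarrow> pt" where
  "bisector i = (if i = 0 then (1, -1) else if i = 1 then (1, 1)
     else if i = 2 then (-1, 1) else (-1, -1))"

text \<open>(Unnormalised) projection of w - v onto the bisector of cone i.\<close>
definition proj :: "nat \<Rightarrow> pt \<Rightarrow> pt \<Rightarrow> real" where
  "proj i v w = (w - v) \<bullet> bisector i"

text \<open>nb is a valid neighbour function of the Theta_4-graph of P:
  for each v in P and each nonempty cone, nb v i is a point of the cone
  (other than v) minimising the projection onto the bisector.\<close>
definition theta4_nb :: "pt set \<Rightarrow> (pt \<Rightarrow> nat \<Rightarrow> pt) \<Rightarrow> bool" where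
  "theta4_nb P nb \<longleftrightarrow> (\<forall>v\<in>P. \<forall>i<4. (P - {v}) \<inter> cone i v \<noteq> {} \<longrightarrow>
      nb v i \<in> (P - {v}) \<inter> cone i v \<and>
      (\<forall>w \<in> (P - {v}) \<inter> cone i v. proj i v (nb v i) \<le> proj i v w))"

text \<open>The region T(v, l_t^-) with t = (0,0), l_t^- = {x + y = 0}.\<close>
definition Treg :: "pt \<Rightarrow> pt set" where
  "Treg v = (if fst v + snd v < 0 then cone 1 v \<inter> {w. fst w + snd w \<le> 0}
     else if fst v + snd v > 0 then cone 3 v \<inter> {w. fst w + snd w \<ge> 0}
     else {v})"

definition clean :: "pt set \<Rightarrow> pt \<Rightarrow> bool" where
  "clean P v \<longleftrightarrow> Treg v \<inter> P \<subseteq> {v}"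

text \<open>One step of the routing algorithm towards t = (0,0).
  Sweeping step if v is not clean, greedy step otherwise (into a cone containing t).\<close>
definition alg_step :: "pt set \<Rightarrow> (pt \<Rightarrow> nat \<Rightarrow> pt) \<Rightarrow> pt \<Rightarrow> pt \<Rightarrow> bool" where
  "alg_step P nb v w \<longleftrightarrow>
     (\<not> clean P v \<and> w = (if fst v + snd v < 0 then nb v 1 else nb v 3)) \<or>
     (clean P v \<and> (\<exists>i<4. (0,0) \<in> cone i v \<and> w = nb v i))"

definition alg_route :: "pt set \<Rightarrow> (pt \<Rightarrow> nat \<Rightarrow> pt) \<Rightarrow> pt \<Rightarrow> pt list \<Rightarrow> bool" where
  "alg_route P nb s vs \<longleftrightarrow> vs \<noteq> [] \<and> hd vs = s \<and> last vs = (0,0) \<and>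
     (\<forall>j < length vs - 1. vs ! j \<noteq> (0,0) \<and> alg_step P nb (vs ! j) (vs ! Suc j))"

text \<open>Bounding triangle of the greedy edge (p,q): the triangle bounded by the lines
  x + y = 0, the line L through p (horizontal if p is in the Northern or Southern
  quadrant of t, i.e. |x| <= |y|, vertical otherwise) and the line through q of slope 1.
  Its vertices are the three pairwise intersection points of these lines.\<close>
definition bounding_triangle :: "pt \<Rightarrow> pt \<Rightarrow> pt set" where
  "bounding_triangle p q =
     (let d = snd q - fst q; a = (- d / 2, d / 2) in
      if \<bar>fst p\<bar> \<le> \<bar>snd p\<bar>
      then convex hull {a, (- snd p, snd p), (snd p - d, snd p)}
      else convex hull {a, (fst p, - fst p), (fst p, fst p + d)})"

end

theory Submission
  imports Defs
begin

lemma tri_int: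
  fixes A B C w f1 f2 f3 :: "real \<times> real"
  assumes "f1 \<noteq> 0" "f2 \<noteq> 0" "f3 \<noteq> 0"
    and "\<forall>z\<in>{A,B,C}. f1 \<bullet> z \<le> c1 \<and> f2 \<bullet> z \<le> c2 \<and> f3 \<bullet> z \<le> c3"
    and "w \<in> interior (convex hull {A,B,C})"
  shows "f1 \<bullet> w < c1 \<and> f2 \<bullet> w < c2 \<and> f3 \<bullet> w < c3"
proof -
  let ?S = "{z. f1 \<bullet> z \<le> c1} \<inter> {z. f2 \<bullet> z \<le> c2} \<inter> {z. f3 \<bullet> z \<le> c3}"
  have "convex hull {A,B,C} \<subseteq> ?S"
    by (rule hull_minimal) (use assms(4) in \<open>auto intro!: convex_Int convex_halfspace_le\<close>)
  hence "interior (convex hull {A,B,C}) \<subseteq> interior ?S" by (rule interior_mono)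
  also have "interior ?S = {z. f1 \<bullet> z < c1} \<inter> {z. f2 \<bullet> z < c2} \<inter> {z. f3 \<bullet> z < c3}"
    by (simp add: interior_Int interior_halfspace_le assms(1-3))
  finally show ?thesis using assms(5) by blast
qed

lemma local_lemma:
  assumes nb: "theta4_nb P nb" and t: "(0,0) \<in> P" and vP: "v \<in> P" and v0: "v \<noteq> (0,0)"
    and cl: "clean P v" and i: "i < 4" "(0,0) \<in> cone i v"
    and wP: "w \<in> P" and wi: "w \<in> interior (bounding_triangle v (nb v i))"
  shows False
proof -
  obtain x y where v: "v = (x,y)" by (cases v)
  obtain a b where w: "w = (a,b)" by (cases w)
  obtain qx qy where q: "nb v i = (qx,qy)" by (cases "nb v i")
  have ne: "(P - {v}) \<inter> cone i v \<noteq> {}" using t i v0 by blast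
  have nbf: "nb v i \<in> (P - {v}) \<inter> cone i v \<and> (\<forall>z\<in>(P - {v}) \<inter> cone i v. proj i v (nb v i) \<le> proj i v z)"
    using nb vP i ne unfolding theta4_nb_def by blast
  have qc: "(qx,qy) \<in> cone i v" and qmin: "\<And>z. z \<in> P \<Longrightarrow> z \<noteq> v \<Longrightarrow> z \<in> cone i v \<Longrightarrow> proj i v (qx,qy) \<le> proj i v z"
    and qP: "(qx,qy) \<in> P" "(qx,qy) \<noteq> v" using nbf q by auto
  have clz: "\<And>z. z \<in> P \<Longrightarrow> z \<in> Treg v \<Longrightarrow> z = v" using cl unfolding clean_def by blast
  define d where "d = qy - qx"
  have wi': "(a,b) \<in> interior (if \<bar>x\<bar> \<le> \<bar>y\<bar>
      then convex hull {(- d / 2, d / 2), (- y, y), (y - d, y)}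
      else convex hull {(- d / 2, d / 2), (x, - x), (x, x + d)})"
    using wi unfolding bounding_triangle_def Let_def q fst_conv snd_conv d_def[symmetric]
    unfolding v w fst_conv snd_conv .
  have "i = 0 \<or> i = 1 \<or> i = 2 \<or> i = 3" using i by auto
  moreover {
    assume i1: "i = 1"
    have xy: "x \<le> 0" "y \<le> 0" using i(2) i1 v by (auto simp: cone_def)
    have "x + y < 0" using xy v0 v by auto
    moreover have "proj i v (qx,qy) \<le> proj i v (0,0)" using qmin[OF t] v0 i by auto
    ultimately have "(qx,qy) \<in> Treg v" using qc i1 v by (auto simp: Treg_def proj_def bisector_def cone_def)
    hence False using clz qP by blast
  }
  moreover {
    assume i1: "i = 3"
    have xy: "x \<ge> 0" "y \<ge> 0" using i(2) i1 v by (auto simp: cone_def)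
    have "x + y > 0" using xy v0 v by auto
    moreover have "proj i v (qx,qy) \<le> proj i v (0,0)" using qmin[OF t] v0 i by auto
    ultimately have "(qx,qy) \<in> Treg v" using qc i1 v by (auto simp: Treg_def proj_def bisector_def cone_def)
    hence False using clz qP by blast
  }
  moreover {
    assume i0: "i = 0"
    have xy: "x \<le> 0" "0 \<le> y" using i(2) i0 v by (auto simp: cone_def)
    have dle: "d \<le> y - x" using qc i0 v by (auto simp: cone_def d_def)
    have qm: "\<And>a b. (a,b) \<in> P \<Longrightarrow> (a,b) \<noteq> (x,y) \<Longrightarrow> a \<ge> x \<Longrightarrow> b \<le> y \<Longrightarrow> b - a \<le> d"
      using qmin i0 v by (fastforce simp: cone_def proj_def bisector_def d_def)
    have False
    proof (cases "x + y < 0")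
      case True
      have nh: "\<not> \<bar>x\<bar> \<le> \<bar>y\<bar>" using True xy by auto
      have "(-1,0) \<bullet> (a,b) < -x \<and> (1,-1) \<bullet> (a,b) < -d \<and> (1,1) \<bullet> (a,b) < (0::real)"
        apply (rule tri_int[where A="(- d / 2, d / 2)" and B="(x, - x)" and C="(x, x + d)"])
        using wi' nh True xy dle by (auto simp: zero_prod_def)
      hence h: "a > x" "b - a > d" "a + b < 0" by auto
      show False
      proof (cases "b \<ge> y")
        case True
        hence "(a,b) \<in> Treg v" using h v \<open>x+y<0\<close> by (auto simp: Treg_def cone_def)
        thus False using clz wP w v h by auto
      next
        case False
        thus False using qm[of a b] wP w h by auto
      qed
    next
      case False
      have nh: "\<bar>x\<bar> \<le> \<bar>y\<bar>" using False xy by auto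
      have "(0,1) \<bullet> (a,b) < y \<and> (-1,-1) \<bullet> (a,b) < 0 \<and> (1,-1) \<bullet> (a,b) < (-d::real)"
        apply (rule tri_int[where A="(- d / 2, d / 2)" and B="(- y, y)" and C="(y - d, y)"])
        using wi' nh False xy dle by (auto simp: zero_prod_def)
      hence h: "b < y" "a + b > 0" "b - a > d" by auto
      show False
      proof (cases "a \<le> x")
        case True
        hence "x + y > 0" using h by auto
        hence "(a,b) \<in> Treg v" using h v True by (auto simp: Treg_def cone_def)
        thus False using clz wP w v h by auto
      next
        case False
        thus False using qm[of a b] wP w h by auto
      qed
    qed
  }
  moreover {
    assume i0: "i = 2"
    have xy: "x \<ge> 0" "0 \<ge> y" using i(2) i0 v by (auto simp: cone_def)
    have dle: "d \<ge> y - x" using qc i0 v by (auto simp: cone_def d_def)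
    have qm: "\<And>a b. (a,b) \<in> P \<Longrightarrow> (a,b) \<noteq> (x,y) \<Longrightarrow> a \<le> x \<Longrightarrow> b \<ge> y \<Longrightarrow> b - a \<ge> d"
      using qmin i0 v by (fastforce simp: cone_def proj_def bisector_def d_def)
    have False
    proof (cases "x + y > 0")
      case True
      have nh: "\<not> \<bar>x\<bar> \<le> \<bar>y\<bar>" using True xy by auto
      have "(1,0) \<bullet> (a,b) < x \<and> (-1,-1) \<bullet> (a,b) < 0 \<and> (-1,1) \<bullet> (a,b) < (d::real)"
        apply (rule tri_int[where A="(- d / 2, d / 2)" and B="(x, - x)" and C="(x, x + d)"])
        using wi' nh True xy dle by (auto simp: zero_prod_def)
      hence h: "a < x" "b - a < d" "a + b > 0" by auto
      show False
      proof (cases "b \<le> y")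
        case True
        hence "(a,b) \<in> Treg v" using h v \<open>x+y>0\<close> by (auto simp: Treg_def cone_def)
        thus False using clz wP w v h by auto
      next
        case False
        thus False using qm[of a b] wP w h by auto
      qed
    next
      case False
      have nh: "\<bar>x\<bar> \<le> \<bar>y\<bar>" using False xy by auto
      have "(0,-1) \<bullet> (a,b) < -y \<and> (1,1) \<bullet> (a,b) < 0 \<and> (-1,1) \<bullet> (a,b) < (d::real)"
        apply (rule tri_int[where A="(- d / 2, d / 2)" and B="(- y, y)" and C="(y - d, y)"])
        using wi' nh False xy dle by (auto simp: zero_prod_def)
      hence h: "b > y" "a + b < 0" "b - a < d" by auto
      show False
      proof (cases "a \<ge> x")
        case True
        hence "x + y < 0" using h by auto
        hence "(a,b) \<in> Treg v" using h v True by (auto simp: Treg_def cone_def)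
        thus False using clz wP w v h by auto
      next
        case False
        thus False using qm[of a b] wP w h by auto
      qed
    qed
  }
  ultimately show False by blast
qed

lemma nb_in:
  assumes nb: "theta4_nb P nb" and vP: "v \<in> P" and i: "i < 4" and z: "z \<in> P" "z \<noteq> v" "z \<in> cone i v"
  shows "nb v i \<in> P"
proof -
  have "(P - {v}) \<inter> cone i v \<noteq> {}" using z by blast
  thus ?thesis using nb vP i unfolding theta4_nb_def by blast
qed

theorem lemma2:
  fixes P :: "(real \<times> real) set" and s :: "real \<times> real"
    and nb :: "real \<times> real \<Rightarrow> nat \<Rightarrow> real \<times> real" and vs :: "(real \<times> real) list"
  assumes "finite P" and "(0,0) \<in> P" and "s \<in> P" and "s \<noteq> (0,0)"
    and "s \<in> cone 2 (0,0)" and "fst s + snd s < 0"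
    and "theta4_nb P nb"
    and "alg_route P nb s vs"
  shows "\<forall>j < length vs - 1. clean P (vs ! j) \<longrightarrow>
           P \<inter> interior (bounding_triangle (vs ! j) (vs ! Suc j)) = {}"
proof -
  have r: "vs \<noteq> []" "hd vs = s"
    "\<And>j. j < length vs - 1 \<Longrightarrow> vs ! j \<noteq> (0,0) \<and> alg_step P nb (vs ! j) (vs ! Suc j)"
    using assms(8) unfolding alg_route_def by auto
  have inP: "j < length vs \<Longrightarrow> vs ! j \<in> P" for j
  proof (induction j)
    case 0
    then show ?case using r assms(3) by (simp add: hd_conv_nth[symmetric])
  next
    case (Suc j)
    let ?v = "vs ! j"
    have jl: "j < length vs - 1" using Suc.prems by auto
    have vP: "?v \<in> P" using Suc by auto
    have st: "alg_step P nb ?v (vs ! Suc j)" and v0: "?v \<noteq> (0,0)" using r(3)[OF jl] by auto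
    show ?case
    proof (cases "clean P ?v")
      case True
      then obtain i where i: "i < 4" "(0,0) \<in> cone i ?v" "vs ! Suc j = nb ?v i"
        using st unfolding alg_step_def by auto
      show ?thesis using nb_in[OF assms(7) vP i(1) assms(2) _ i(2)] v0 i(3) by auto
    next
      case False
      then obtain z where z: "z \<in> Treg ?v" "z \<in> P" "z \<noteq> ?v" unfolding clean_def by auto
      show ?thesis
      proof (cases "fst ?v + snd ?v < 0")
        case True
        hence "z \<in> cone 1 ?v" using z by (auto simp: Treg_def)
        moreover have "vs ! Suc j = nb ?v 1" using st False True unfolding alg_step_def by auto
        ultimately show ?thesis using nb_in[OF assms(7) vP _ z(2) z(3)] by auto
      next
        case F2: False
        show ?thesis
        proof (cases "fst ?v + snd ?v > 0")
          case True
          hence "z \<in> cone 3 ?v" using z F2 by (auto simp: Treg_def)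
          moreover have "vs ! Suc j = nb ?v 3" using st False F2 unfolding alg_step_def by auto
          ultimately show ?thesis using nb_in[OF assms(7) vP _ z(2) z(3)] by auto
        next
          case False
          hence "z = ?v" using z F2 by (auto simp: Treg_def)
          thus ?thesis using z by auto
        qed
      qed
    qed
  qed
  show ?thesis
  proof (intro allI impI)
    fix j assume jl: "j < length vs - 1" and cl: "clean P (vs ! j)"
    have st: "alg_step P nb (vs ! j) (vs ! Suc j)" and v0: "vs ! j \<noteq> (0,0)" using r(3)[OF jl] by auto
    obtain i where i: "i < 4" "(0,0) \<in> cone i (vs ! j)" "vs ! Suc j = nb (vs ! j) i"
      using st cl unfolding alg_step_def by auto
    have vP: "vs ! j \<in> P" using inP jl by auto
    show "P \<inter> interior (bounding_triangle (vs ! j) (vs ! Suc j)) = {}"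
      unfolding i(3) using local_lemma[OF assms(7) assms(2) vP v0 cl i(1) i(2)] by blast
  qed
qed

end
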